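(* Let $n\ge 2$, let $p>2$ be a prime, $M=(p-1)/2$, and let $\delta>0$ and $R>0$ be parameters such that $R\le n/\delta$, $\frac{n-1}{\delta^2}+n\left(\frac{R}{\delta}+\frac14\right)\le M$, and $|\tilde z_j^{(i)}|\le R$ for all $i\in\{1,2\}$, $j\in\{1,\dots,n\}$. Then the Exact Correlation Protocol (described in the context) implements the computation of the sample Pearson correlation $r$ with controlled leakage for the leakage function $$\ell(\mathbf{x}^{(1)},\mathbf{x}^{(2)})=\Big((\varepsilon_j^{(1)},\varepsilon_j^{(2)})_{j=1}^n,\ \sum_{j=1}^n z_j^{(1)}\varepsilon_j^{(2)},\ \sum_{j=1}^n z_j^{(2)}\varepsilon_j^{(1)}\Big),$$ against a passive (honest-but-curious), computationally unbounded adversary corrupting one of the two participants, assuming the participants have access to an ideal Beaver-triple functionality $\mathcal{F}_{\mathrm{BT}}$.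
   Context: Fixed-point encoding: for a prime $p>2$ and $M=(p-1)/2$, and $\delta>0$, let $\mathbb{Q}_{(M,\delta)}=\{x\delta : x\in\mathbb{Z},\ -M\le x\le M\}$. Define $\varphi_\delta:\mathbb{Q}_{(M,\delta)}\to\mathbb{F}_p$ by $\varphi_\delta(x\delta)=x \bmod p$; it is a bijection with inverse $\varphi_\delta^{-1}(y)=\delta\psi(y)$, where, representing $y\in\mathbb{F}_p$ by an integer in $\{0,\dots,p-1\}$, $\psi(y)=y$ if $y\le M$ and $\psi(y)=y-p$ otherwise. Data: participant $P_i$ ($i=1,2$) privately holds real samples $\mathbf{x}^{(i)}=(x_1^{(i)},\dots,x_n^{(i)})$ (not all equal). Let $\bar x^{(i)}$ be their mean, $s^{(i)}=\sqrt{\frac{1}{n-1}\sum_{j=1}^n(x_j^{(i)}-\bar x^{(i)})^2}$, and $z_j^{(i)}=(x_j^{(i)}-\bar x^{(i)})/s^{(i)}$. The sample Pearson correlation is $r=\frac{1}{n-1}\sum_{j=1}^n z_j^{(1)}z_j^{(2)}$. Each $z_j^{(i)}$ is rounded to a nearest element $\tilde z_j^{(i)}\in\mathbb{Q}_{(M,\delta)}$ and $\varepsilon_j^{(i)}=z_j^{(i)}-\tilde z_j^{(i)}\in[-\delta/2,\delta/2]$. Additive secret sharing: a sharing $[x]$ of $x\in\mathbb{F}_p$ consists of shares $[x]_1,[x]_2\in\mathbb{F}_p$, held by $P_1,P_2$, with $[x]_1+[x]_2=x$; the sharer picks one share uniformly at random. $\mathcal{F}_{\mathrm{BT}}$ supplies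 fresh Beaver triples: sharings $[u],[v],[w]$ with $u,v$ uniform in $\mathbb{F}_p$ and $w=uv$. To multiply $[x],[y]$ with a fresh triple, the participants open $x-u$ and $y-v$, and set $[z]_1=[w]_1+[u]_1(y-v)+[v]_1(x-u)+(x-u)(y-v)$, $[z]_2=[w]_2+[u]_2(y-v)+[v]_2(x-u)$, giving a sharing of $xy$. Exact Correlation Protocol: (1) $P_i$ computes $s^{(i)}$, $z_j^{(i)}$, $\tilde z_j^{(i)}$, $\varepsilon_j^{(i)}$ and sends $(\varepsilon_j^{(i)})_{j=1}^n$ to $P_{3-i}$. (2) $P_i$ computes $\sum_{j=1}^n z_j^{(i)}\varepsilon_j^{(3-i)}$ and sends it to $P_{3-i}$. (3) For each $j$, $P_i$ creates and distributes a sharing $[\varphi_\delta(\tilde z_j^{(i)})]$. (4) The participants compute $[a]=\sum_{j=1}^n[\varphi_\delta(\tilde z_j^{(1)})][\varphi_\delta(\tilde z_j^{(2)})]$ using one Beaver triple per product and local addition of shares. (5) $P_i$ sends $[a]_i$ to $P_{3-i}$; both recover $a$. (6) Each participant outputs $\frac{1}{n-1}\Big(\varphi_{\delta^2}^{-1}(a)+\sum_{i=1}^2\sum_{j=1}^n z_j^{(i)}\varepsilon_j^{(3-i)}-\sum_{j=1}^n\varepsilon_j^{(1)}\varepsilon_j^{(2)}\Big)$. Controlled leakage: In the real world, both participants first send their inputs to a null sink $\mathcal{N}$ (which discards them and replies nothing), then run the protocol using $\mathcal{F}_{\mathrm{BT}}$; $V^\ell_{\mathsf{real}}$ is the view (everything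 seen) of the corrupted participant. In the ideal world, both participants first send their inputs to a leaker $\mathcal{L}$, which gives $\ell(\mathbf{x}^{(1)},\mathbf{x}^{(2)})$ to a simulator $\mathcal{S}$; the honest participant gives its input to an ideal functionality $\mathcal{F}_r$ which outputs $r$ to both; the corrupted participant runs the protocol, but all messages from the honest party and from $\mathcal{F}_{\mathrm{BT}}$ are produced by $\mathcal{S}$, which may extract and submit the corrupted participant's input to $\mathcal{F}_r$ and receive $r$; $V^\ell_{\mathsf{ideal}}$ is the corrupted participant's view. The protocol implements the computation with controlled leakage (for $\ell$) if there is a simulator such that $\Pr[\mathcal{D}(V^\ell_{\mathsf{real}})=\mathsf{real}]=\Pr[\mathcal{D}(V^\ell_{\mathsf{ideal}})=\mathsf{real}]$ for every distinguisher $\mathcal{D}$. *)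

theory Defs
  imports "HOL-Probability.Probability"
begin

definition smean :: "real list \<Rightarrow> real" where
  "smean xs = sum_list xs / real (length xs)"

definition sdev :: "real list \<Rightarrow> real" where
  "sdev xs = sqrt (sum_list (map (\<lambda>x. (x - smean xs)^2) xs) / (real (length xs) - 1))"

definition zscores :: "real list \<Rightarrow> real list" where
  "zscores xs = map (\<lambda>x. (x - smean xs) / sdev xs) xs"

definition pearson :: "real list \<Rightarrow> real list \<Rightarrow> real" where
  "pearson xs ys = sum_list (map2 (*) (zscores xs) (zscores ys)) / (real (length xs) - 1)"

section \<open>Fixed-point encoding into F_p (F_p represented by the integers 0..p-1)\<close>

definition fpM :: "int \<Rightarrow> int" where
  "fpM p = (p - 1) div 2"

definition Qset :: "int \<Rightarrow> real \<Rightarrow> real set" where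
  "Qset p \<delta> = {of_int x * \<delta> | x. - fpM p \<le> x \<and> x \<le> fpM p}"

text \<open>phi_delta (x*delta) = x mod p; we pass the integer numerator x.\<close>
definition fp_phi :: "int \<Rightarrow> int \<Rightarrow> int" where
  "fp_phi p x = x mod p"

definition fp_psi :: "int \<Rightarrow> int \<Rightarrow> int" where
  "fp_psi p y = (if y \<le> fpM p then y else y - p)"

definition fp_phi_inv :: "int \<Rightarrow> real \<Rightarrow> int \<Rightarrow> real" where
  "fp_phi_inv p \<delta> y = \<delta> * of_int (fp_psi p y)"

definition nearest_rounding :: "int \<Rightarrow> real \<Rightarrow> (real \<Rightarrow> int) \<Rightarrow> bool" where
  "nearest_rounding p \<delta> rnd \<longleftrightarrow>
     (\<forall>z. - fpM p \<le> rnd z \<and> rnd z \<le> fpM p \<and>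
          (\<forall>q\<in>Qset p \<delta>. \<bar>z - of_int (rnd z) * \<delta>\<bar> \<le> \<bar>z - q\<bar>))"

definition zt_num :: "(real \<Rightarrow> int) \<Rightarrow> real list \<Rightarrow> int list" where
  "zt_num rnd xs = map rnd (zscores xs)"

definition zt :: "real \<Rightarrow> (real \<Rightarrow> int) \<Rightarrow> real list \<Rightarrow> real list" where
  "zt \<delta> rnd xs = map (\<lambda>z. of_int (rnd z) * \<delta>) (zscores xs)"

definition epsv :: "real \<Rightarrow> (real \<Rightarrow> int) \<Rightarrow> real list \<Rightarrow> real list" where
  "epsv \<delta> rnd xs = map (\<lambda>z. z - of_int (rnd z) * \<delta>) (zscores xs)"

primrec iid_list :: "'a pmf \<Rightarrow> nat \<Rightarrow> 'a list pmf" where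
  "iid_list D 0 = return_pmf []"
| "iid_list D (Suc n) = bind_pmf D (\<lambda>x. map_pmf (Cons x) (iid_list D n))"

definition unif_vec :: "int \<Rightarrow> nat \<Rightarrow> int list pmf" where
  "unif_vec p n = iid_list (pmf_of_set {0..<p}) n"

text \<open>Messages received by the corrupted participant P_c from the honest P_h and from F_BT.\<close>
record msgs =
  m_eps :: "real list"                  \<comment> \<open>step 1: (epsilon_j^(h))_j\<close>
  m_cross :: real                       \<comment> \<open>step 2: sum_j z_j^(h) epsilon_j^(c)\<close>
  m_shares :: "int list"                \<comment> \<open>step 3: shares [phi(tilde z_j^(h))]_c\<close>
  m_triples :: "(int \<times> int \<times> int) list" \<comment> \<open>step 4: F_BT shares ([u_j]_c,[v_j]_c,[w_j]_c)\<close>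
  m_open :: "(int \<times> int) list"         \<comment> \<open>step 4: P_h's shares of x_j-u_j and y_j-v_j\<close>
  m_final :: int                        \<comment> \<open>step 5: [a]_h\<close>

record view =
  v_input :: "real list"
  v_coins :: "int list"    \<comment> \<open>its random coins: the shares it picks in step 3\<close>
  v_msgs :: msgs
  v_output :: real         \<comment> \<open>its output (real world: step 6; ideal world: r from F_r)\<close>

text \<open>Coins: O1!j (resp. O2!j) is the share that P_1 (resp. P_2) picks uniformly and sends to
  the other party when sharing phi(tilde z_j^(1)) (resp. phi(tilde z_j^(2))); Us!j, Vs!j are
  the triple values u_j, v_j; RU!j, RV!j, RW!j are P_1's shares of u_j, v_j, w_j = u_j v_j
  chosen by F_BT (P_2's share being the difference).\<close>
definition exec_view ::
  "int \<Rightarrow> real \<Rightarrow> (real \<Rightarrow> int) \<Rightarrow> nat \<Rightarrow> real list \<Rightarrow> real list \<Rightarrow>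
   int list \<Rightarrow> int list \<Rightarrow> int list \<Rightarrow> int list \<Rightarrow> int list \<Rightarrow> int list \<Rightarrow> int list \<Rightarrow> view" where
  "exec_view p \<delta> rnd c x1 x2 O1 O2 Us Vs RU RV RW = (let
     n = length x1; h = 3 - c;
     k1 = zt_num rnd x1; k2 = zt_num rnd x2;
     e1 = epsv \<delta> rnd x1; e2 = epsv \<delta> rnd x2;
     z1 = zscores x1; z2 = zscores x2;
     X = (\<lambda>j. fp_phi p (k1 ! j)); Y = (\<lambda>j. fp_phi p (k2 ! j));
     shX = (\<lambda>i j. if i = (1::nat) then (X j - O1 ! j) mod p else O1 ! j);
     shY = (\<lambda>i j. if i = (1::nat) then O2 ! j else (Y j - O2 ! j) mod p);
     shU = (\<lambda>i j. if i = (1::nat) then RU ! j else (Us ! j - RU ! j) mod p);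
     shV = (\<lambda>i j. if i = (1::nat) then RV ! j else (Vs ! j - RV ! j) mod p);
     shW = (\<lambda>i j. if i = (1::nat) then RW ! j else ((Us ! j * Vs ! j) mod p - RW ! j) mod p);
     d = (\<lambda>i j. (shX i j - shU i j) mod p);
     e = (\<lambda>i j. (shY i j - shV i j) mod p);
     DD = (\<lambda>j. (d 1 j + d 2 j) mod p);
     EE = (\<lambda>j. (e 1 j + e 2 j) mod p);
     shZ = (\<lambda>i j. (shW i j + shU i j * EE j + shV i j * DD j
                    + (if i = (1::nat) then DD j * EE j else 0)) mod p);
     shA = (\<lambda>i. (\<Sum>j<n. shZ i j) mod p);
     a = (shA 1 + shA 2) mod p;
     cross12 = sum_list (map2 (*) z1 e2);
     cross21 = sum_list (map2 (*) z2 e1);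
     out = (fp_phi_inv p (\<delta>^2) a + (cross12 + cross21) - sum_list (map2 (*) e1 e2)) / (real n - 1)
   in \<lparr> v_input = (if c = 1 then x1 else x2),
        v_coins = (if c = 1 then O1 else O2),
        v_msgs = \<lparr> m_eps = (if c = 1 then e2 else e1),
                   m_cross = (if c = 1 then cross21 else cross12),
                   m_shares = map (\<lambda>j. if c = 1 then shY 1 j else shX 2 j) [0..<n],
                   m_triples = map (\<lambda>j. (shU c j, shV c j, shW c j)) [0..<n],
                   m_open = map (\<lambda>j. (d h j, e h j)) [0..<n],
                   m_final = shA h \<rparr>,
        v_output = out \<rparr>)"

definition real_view ::
  "int \<Rightarrow> real \<Rightarrow> (real \<Rightarrow> int) \<Rightarrow> nat \<Rightarrow> real list \<Rightarrow> real list \<Rightarrow> view pmf" where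
  "real_view p \<delta> rnd c x1 x2 = (let U = unif_vec p (length x1) in
     bind_pmf U (\<lambda>O1. bind_pmf U (\<lambda>O2. bind_pmf U (\<lambda>Us. bind_pmf U (\<lambda>Vs.
     bind_pmf U (\<lambda>RU. bind_pmf U (\<lambda>RV. bind_pmf U (\<lambda>RW.
       return_pmf (exec_view p \<delta> rnd c x1 x2 O1 O2 Us Vs RU RV RW)))))))))"

type_synonym leakage = "real list \<times> real list \<times> real \<times> real"

definition leak :: "real \<Rightarrow> (real \<Rightarrow> int) \<Rightarrow> real list \<Rightarrow> real list \<Rightarrow> leakage" where
  "leak \<delta> rnd x1 x2 =
     (epsv \<delta> rnd x1, epsv \<delta> rnd x2,
      sum_list (map2 (*) (zscores x1) (epsv \<delta> rnd x2)),
      sum_list (map2 (*) (zscores x2) (epsv \<delta> rnd x1)))"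

text \<open>A simulator for corrupted P_c receives the corrupted participant's (extracted) input
  and the shares it sends (equivalently its coins), the leakage l(x1,x2) and r from F_r,
  and produces (possibly at random) all messages the corrupted participant receives.\<close>
type_synonym simulator = "nat \<Rightarrow> real list \<Rightarrow> int list \<Rightarrow> leakage \<Rightarrow> real \<Rightarrow> msgs pmf"

definition ideal_view ::
  "simulator \<Rightarrow> int \<Rightarrow> real \<Rightarrow> (real \<Rightarrow> int) \<Rightarrow> nat \<Rightarrow> real list \<Rightarrow> real list \<Rightarrow> view pmf" where
  "ideal_view S p \<delta> rnd c x1 x2 = (let xc = (if c = 1 then x1 else x2); r = pearson x1 x2 in
     bind_pmf (unif_vec p (length xc)) (\<lambda>coins.
       map_pmf (\<lambda>m. \<lparr> v_input = xc, v_coins = coins, v_msgs = m, v_output = r \<rparr>)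
         (S c xc coins (leak \<delta> rnd x1 x2) r)))"

definition indisting :: "'v pmf \<Rightarrow> 'v pmf \<Rightarrow> bool" where
  "indisting V W \<longleftrightarrow>
     (\<forall>D :: 'v \<Rightarrow> bool. measure_pmf.prob V {v. D v} = measure_pmf.prob W {v. D v})"

definition admissible :: "nat \<Rightarrow> real list \<Rightarrow> bool" where
  "admissible n xs \<longleftrightarrow> length xs = n \<and> (\<exists>a\<in>set xs. \<exists>b\<in>set xs. a \<noteq> b)"

end

theory Submission
  imports Defs "HOL-Number_Theory.Cong"
begin



lemma pmf_of_set_times:
  assumes "finite A" "A \<noteq> {}" "finite B" "B \<noteq> {}"
  shows "pmf_of_set (A \<times> B) = bind_pmf (pmf_of_set A) (\<lambda>a. map_pmf (Pair a) (pmf_of_set B))"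
proof -
  have 1: "A \<times> B = (\<Union>a\<in>A. Pair a ` B)" by auto
  have 2: "pmf_of_set (\<Union>a\<in>A. Pair a ` B) = bind_pmf (pmf_of_set A) (\<lambda>a. pmf_of_set (Pair a ` B))"
    by (rule pmf_of_set_UN[where n="card B"]) (auto simp: assms card_image inj_on_def disjoint_family_on_def)
  have 3: "\<And>a. pmf_of_set (Pair a ` B) = map_pmf (Pair a) (pmf_of_set B)"
    by (rule map_pmf_of_set_inj[symmetric]) (auto simp: assms inj_on_def)
  show ?thesis unfolding 1 2 by (rule bind_pmf_cong) (auto simp: 3)
qed

lemma bind_pmf_of_set_map:
  assumes "finite A" "A \<noteq> {}" "finite B" "B \<noteq> {}"
  shows "bind_pmf (pmf_of_set A) (\<lambda>a. map_pmf (g a) (pmf_of_set B)) =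
         map_pmf (\<lambda>(a, b). g a b) (pmf_of_set (A \<times> B))"
  by (simp add: pmf_of_set_times[OF assms] map_bind_pmf map_pmf_comp o_def)

definition VV :: "int \<Rightarrow> nat \<Rightarrow> int list set" where
  "VV p n = {xs. set xs \<subseteq> {0..<p} \<and> length xs = n}"

lemma VV_finite[simp]: "finite (VV p n)"
  unfolding VV_def by (rule finite_lists_length_eq) simp

lemma VV_ne[simp]: "p > 0 \<Longrightarrow> VV p n \<noteq> {}"
proof -
  assume "p > 0"
  then have "replicate n 0 \<in> VV p n" by (auto simp: VV_def)
  then show ?thesis by blast
qed

lemma VV_Suc: "VV p (Suc n) = (\<lambda>(x, xs). x # xs) ` ({0..<p} \<times> VV p n)"
  unfolding VV_def by (auto simp: length_Suc_conv image_iff)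

lemma unif_vec_VV: "p > 0 \<Longrightarrow> unif_vec p n = pmf_of_set (VV p n)"
proof (induction n)
  case 0
  have "VV p 0 = {[]}" by (auto simp: VV_def)
  then show ?case by (simp add: unif_vec_def pmf_of_set_singleton)
next
  case (Suc n)
  have "pmf_of_set (VV p (Suc n)) = map_pmf (\<lambda>(x, xs). x # xs) (pmf_of_set ({0..<p} \<times> VV p n))"
    unfolding VV_Suc by (rule map_pmf_of_set_inj[symmetric]) (auto simp: inj_on_def Suc.prems)
  also have "\<dots> = bind_pmf (pmf_of_set {0..<p}) (\<lambda>x. map_pmf (Cons x) (pmf_of_set (VV p n)))"
    using Suc.prems by (subst bind_pmf_of_set_map) (auto simp: map_pmf_comp)
  finally show ?case using Suc by (simp add: unif_vec_def)
qed



lemma beaver_j: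
  fixes p X Y U V RU RV RW O1 O2 :: int
  defines "DD \<equiv> (((X - O1) mod p - RU) mod p + (O1 - (U - RU) mod p) mod p) mod p"
      and "EE \<equiv> ((O2 - RV) mod p + ((Y - O2) mod p - (V - RV) mod p) mod p) mod p"
  shows "((RW + RU * EE + RV * DD + DD * EE) mod p
          + (((U * V) mod p - RW) mod p + (U - RU) mod p * EE + (V - RV) mod p * DD) mod p) mod p
         = (X * Y) mod p"
proof -
  have D: "[DD = X - U] (mod p)" unfolding DD_def cong_def by (simp add: mod_simps)
  have E: "[EE = Y - V] (mod p)" unfolding EE_def cong_def by (simp add: mod_simps)
  have "[((RW + RU * EE + RV * DD + DD * EE) mod p
          + (((U * V) mod p - RW) mod p + (U - RU) mod p * EE + (V - RV) mod p * DD) mod p) mod p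
        = ((RW + RU * (Y - V) + RV * (X - U) + (X - U) * (Y - V))
          + ((U * V - RW) + (U - RU) * (Y - V) + (V - RV) * (X - U)))] (mod p)"
    by (simp only: cong_mod_left) (intro cong_add cong_mult cong_diff cong_refl D E cong_mod_leftI)
  also have "(RW + RU * (Y - V) + RV * (X - U) + (X - U) * (Y - V))
          + ((U * V - RW) + (U - RU) * (Y - V) + (V - RV) * (X - U)) = X * Y"
    by (simp add: algebra_simps)
  finally show ?thesis unfolding cong_def by simp
qed



lemma sum_list_map_nth: "sum_list (map g xs) = (\<Sum>j<length xs. g (xs!j))"
  by (simp add: sum_list_sum_nth atLeast0LessThan)

lemma sum_list_map2_nth:
  "length xs = n \<Longrightarrow> length ys = n \<Longrightarrow> sum_list (map2 f xs ys) = (\<Sum>j<n. f (xs!j) (ys!j))"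
  by (simp add: sum_list_sum_nth atLeast0LessThan)

lemma length_zscores[simp]: "length (zscores xs) = length xs"
  by (simp add: zscores_def)

lemma zscores_sq:
  assumes "admissible n xs" "n \<ge> 2"
  shows "(\<Sum>j<n. (zscores xs ! j)^2) = real n - 1"
proof -
  define m where "m = smean xs"
  define S where "S = (\<Sum>j<n. (xs!j - m)^2)"
  have len: "length xs = n" using assms by (simp add: admissible_def)
  have sd: "sdev xs = sqrt (S / (real n - 1))"
    by (simp add: sdev_def S_def m_def sum_list_map_nth len)
  have Spos: "S > 0"
  proof (rule ccontr)
    assume "\<not> S > 0"
    then have "S = 0" unfolding S_def by (metis sum_nonneg zero_le_power2 order_less_le)
    then have "\<forall>j<n. xs!j = m" unfolding S_def
      by (subst (asm) sum_nonneg_eq_0_iff) auto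
    then have "\<forall>a\<in>set xs. a = m" by (auto simp: in_set_conv_nth len)
    then show False using assms(1) unfolding admissible_def by metis
  qed
  have n1: "real n - 1 > 0" using assms(2) by simp
  have s2: "(sdev xs)^2 = S / (real n - 1)" using Spos n1 by (simp add: sd)
  have "(\<Sum>j<n. (zscores xs ! j)^2) = (\<Sum>j<n. (xs!j - m)^2 / (sdev xs)^2)"
    by (rule sum.cong) (auto simp: zscores_def len m_def power_divide)
  also have "\<dots> = S / (sdev xs)^2" by (simp add: S_def sum_divide_distrib)
  also have "\<dots> = real n - 1" using Spos n1 by (simp add: s2)
  finally show ?thesis .
qed

lemma round_err:
  assumes nr: "nearest_rounding p \<delta> rnd" and d: "\<delta> > 0"
    and lt: "\<bar>of_int (rnd z) * \<delta>\<bar> < of_int (fpM p) * \<delta>"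
  shows "\<bar>z - of_int (rnd z) * \<delta>\<bar> \<le> \<delta> / 2"
proof -
  define k where "k = rnd z"
  have "\<bar>of_int k\<bar> * \<delta> < of_int (fpM p) * \<delta>" using lt d by (simp add: k_def abs_mult)
  then have "\<bar>of_int k\<bar> < (of_int (fpM p) :: real)" using d by simp
  then have kl: "\<bar>k\<bar> < fpM p" by linarith
  have q1: "of_int (k+1) * \<delta> \<in> Qset p \<delta>" unfolding Qset_def using kl by (intro CollectI exI[of _ "k+1"]) auto
  have q2: "of_int (k-1) * \<delta> \<in> Qset p \<delta>" unfolding Qset_def using kl by (intro CollectI exI[of _ "k-1"]) auto
  have a1: "\<bar>z - of_int k * \<delta>\<bar> \<le> \<bar>z - of_int (k+1) * \<delta>\<bar>" using nr q1 unfolding nearest_rounding_def k_def by blast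
  have a2: "\<bar>z - of_int k * \<delta>\<bar> \<le> \<bar>z - of_int (k-1) * \<delta>\<bar>" using nr q2 unfolding nearest_rounding_def k_def by blast
  have a1': "\<bar>z - of_int k * \<delta>\<bar> \<le> \<bar>(z - of_int k * \<delta>) - \<delta>\<bar>" using a1 by (simp add: algebra_simps)
  have a2': "\<bar>z - of_int k * \<delta>\<bar> \<le> \<bar>(z - of_int k * \<delta>) + \<delta>\<bar>" using a2 by (simp add: algebra_simps)
  show ?thesis using a1' a2' d unfolding k_def[symmetric] by arith
qed

lemma psi_mod:
  assumes "p > 0" "- fpM p \<le> s" "s \<le> fpM p"
  shows "fp_psi p (s mod p) = s"
proof -
  have M: "2 * fpM p \<le> p - 1" by (simp add: fpM_def)
  show ?thesis
  proof (cases "s \<ge> 0")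
    case True
    then have "s mod p = s" using assms M by (intro mod_pos_pos_trivial) auto
    then show ?thesis using assms by (simp add: fp_psi_def)
  next
    case False
    have "s mod p = (s + p) mod p" by simp
    also have "\<dots> = s + p" using assms M False by (intro mod_pos_pos_trivial) auto
    finally show ?thesis using assms M False by (simp add: fp_psi_def)
  qed
qed

lemma main_bound:
  fixes z1 z2 e1 e2 :: "nat \<Rightarrow> real" and k1 k2 :: "nat \<Rightarrow> int" and \<delta> R :: real
  assumes d: "\<delta> > 0"
    and s1: "(\<Sum>j<n. (z1 j)^2) = real n - 1" and s2: "(\<Sum>j<n. (z2 j)^2) = real n - 1"
    and ea: "\<And>j. j < n \<Longrightarrow> \<bar>e1 j\<bar> \<le> \<delta>/2" and eb: "\<And>j. j < n \<Longrightarrow> \<bar>e2 j\<bar> \<le> \<delta>/2"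
    and ka: "\<And>j. j < n \<Longrightarrow> \<bar>of_int (k1 j) * \<delta>\<bar> \<le> R"
    and kb: "\<And>j. j < n \<Longrightarrow> \<bar>of_int (k2 j) * \<delta>\<bar> \<le> R"
    and za: "\<And>j. j < n \<Longrightarrow> z1 j = of_int (k1 j) * \<delta> + e1 j"
    and zb: "\<And>j. j < n \<Longrightarrow> z2 j = of_int (k2 j) * \<delta> + e2 j"
  shows "\<bar>of_int (\<Sum>j<n. k1 j * k2 j)\<bar> \<le> (real n - 1) / \<delta>^2 + real n * (R / \<delta> + 1/4)"
proof -
  have t: "\<delta>^2 * of_int (k1 j * k2 j) = z1 j * z2 j - z1 j * e2 j - e1 j * (of_int (k2 j) * \<delta>)"
    if "j < n" for j
    using za[OF that] zb[OF that] by (simp add: algebra_simps power2_eq_square)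
  have "\<delta>^2 * of_int (\<Sum>j<n. k1 j * k2 j) =
        (\<Sum>j<n. z1 j * z2 j) - (\<Sum>j<n. z1 j * e2 j) - (\<Sum>j<n. e1 j * (of_int (k2 j) * \<delta>))"
    by (simp add: sum_distrib_left t sum_subtractf del: of_int_mult)
  then have "\<delta>^2 * \<bar>of_int (\<Sum>j<n. k1 j * k2 j)\<bar> \<le>
        \<bar>\<Sum>j<n. z1 j * z2 j\<bar> + (\<Sum>j<n. \<bar>z1 j * e2 j\<bar>) + (\<Sum>j<n. \<bar>e1 j * (of_int (k2 j) * \<delta>)\<bar>)"
  proof -
    assume eq: "\<delta>^2 * of_int (\<Sum>j<n. k1 j * k2 j) =
        (\<Sum>j<n. z1 j * z2 j) - (\<Sum>j<n. z1 j * e2 j) - (\<Sum>j<n. e1 j * (of_int (k2 j) * \<delta>))"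
    have "\<delta>^2 * \<bar>of_int (\<Sum>j<n. k1 j * k2 j)\<bar> = \<bar>\<delta>^2 * of_int (\<Sum>j<n. k1 j * k2 j)\<bar>"
      by (simp add: abs_mult)
    also have "\<dots> \<le> \<bar>\<Sum>j<n. z1 j * z2 j\<bar> + \<bar>\<Sum>j<n. z1 j * e2 j\<bar> + \<bar>\<Sum>j<n. e1 j * (of_int (k2 j) * \<delta>)\<bar>"
      unfolding eq by linarith
    also have "\<dots> \<le> \<bar>\<Sum>j<n. z1 j * z2 j\<bar> + (\<Sum>j<n. \<bar>z1 j * e2 j\<bar>) + (\<Sum>j<n. \<bar>e1 j * (of_int (k2 j) * \<delta>)\<bar>)"
      by (intro add_mono sum_abs order_refl)
    finally show ?thesis .
  qed
  moreover have "\<bar>\<Sum>j<n. z1 j * z2 j\<bar> \<le> real n - 1"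
  proof -
    have "\<bar>\<Sum>j<n. z1 j * z2 j\<bar> \<le> (\<Sum>j<n. \<bar>z1 j * z2 j\<bar>)" by (rule sum_abs)
    also have "\<dots> \<le> (\<Sum>j<n. ((z1 j)^2 + (z2 j)^2) / 2)"
    proof (rule sum_mono)
      fix j
      have "0 \<le> (\<bar>z1 j\<bar> - \<bar>z2 j\<bar>)^2" by simp
      then show "\<bar>z1 j * z2 j\<bar> \<le> ((z1 j)^2 + (z2 j)^2) / 2"
        by (simp add: abs_mult power2_eq_square algebra_simps)
    qed
    also have "\<dots> = real n - 1" using s1 s2 by (simp add: sum_divide_distrib[symmetric] sum.distrib)
    finally show ?thesis .
  qed
  moreover have "(\<Sum>j<n. \<bar>z1 j * e2 j\<bar>) \<le> (\<Sum>j<n. (R + \<delta>/2) * (\<delta>/2))"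
  proof (rule sum_mono)
    fix j assume "j \<in> {..<n}"
    then have j: "j < n" by simp
    have "\<bar>z1 j\<bar> \<le> R + \<delta>/2" using za[OF j] ka[OF j] ea[OF j] by linarith
    then show "\<bar>z1 j * e2 j\<bar> \<le> (R + \<delta>/2) * (\<delta>/2)"
      unfolding abs_mult using eb[OF j] by (intro mult_mono) auto
  qed
  moreover have "(\<Sum>j<n. \<bar>e1 j * (of_int (k2 j) * \<delta>)\<bar>) \<le> (\<Sum>j<n. (\<delta>/2) * R)"
  proof (rule sum_mono)
    fix j assume "j \<in> {..<n}"
    then have j: "j < n" by simp
    show "\<bar>e1 j * (of_int (k2 j) * \<delta>)\<bar> \<le> (\<delta>/2) * R"
      unfolding abs_mult[of "e1 j"] using ea[OF j] kb[OF j] d by (intro mult_mono) auto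
  qed
  ultimately have "\<delta>^2 * \<bar>of_int (\<Sum>j<n. k1 j * k2 j)\<bar> \<le>
      (real n - 1) + real n * ((R + \<delta>/2) * (\<delta>/2)) + real n * ((\<delta>/2) * R)"
    unfolding sum_constant card_lessThan by linarith
  also have "\<dots> = \<delta>^2 * ((real n - 1) / \<delta>^2 + real n * (R / \<delta> + 1/4))"
    using d by (simp add: field_simps power2_eq_square)
  finally show ?thesis using d by simp
qed



definition bDD :: "int \<Rightarrow> (nat \<Rightarrow> int) \<Rightarrow> int list \<Rightarrow> int list \<Rightarrow> int list \<Rightarrow> nat \<Rightarrow> int" where
  "bDD p X O1 Us RU j = (((X j - O1!j) mod p - RU!j) mod p + (O1!j - (Us!j - RU!j) mod p) mod p) mod p"
definition bEE :: "int \<Rightarrow> (nat \<Rightarrow> int) \<Rightarrow> int list \<Rightarrow> int list \<Rightarrow> int list \<Rightarrow> nat \<Rightarrow> int" where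
  "bEE p Y O2 Vs RV j = ((O2!j - RV!j) mod p + ((Y j - O2!j) mod p - (Vs!j - RV!j) mod p) mod p) mod p"

lemma exec_view_eq1:
  "exec_view p \<delta> rnd 1 x1 x2 O1 O2 Us Vs RU RV RW = (let
     n = length x1;
     e1 = epsv \<delta> rnd x1; e2 = epsv \<delta> rnd x2;
     z1 = zscores x1; z2 = zscores x2;
     X = (\<lambda>j. fp_phi p (zt_num rnd x1 ! j)); Y = (\<lambda>j. fp_phi p (zt_num rnd x2 ! j));
     DD = bDD p X O1 Us RU; EE = bEE p Y O2 Vs RV;
     Z1 = (\<lambda>j. (RW!j + RU!j * EE j + RV!j * DD j + DD j * EE j) mod p);
     Z2 = (\<lambda>j. (((Us!j * Vs!j) mod p - RW!j) mod p + (Us!j - RU!j) mod p * EE j + (Vs!j - RV!j) mod p * DD j) mod p);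
     A1 = (\<Sum>j<n. Z1 j) mod p; A2 = (\<Sum>j<n. Z2 j) mod p;
     a = (A1 + A2) mod p;
     cross12 = sum_list (map2 (*) z1 e2);
     cross21 = sum_list (map2 (*) z2 e1);
     out = (fp_phi_inv p (\<delta>^2) a + (cross12 + cross21) - sum_list (map2 (*) e1 e2)) / (real n - 1)
   in \<lparr> v_input = x1,
        v_coins = O1,
        v_msgs = \<lparr> m_eps = e2,
                   m_cross = cross21,
                   m_shares = map (\<lambda>j. O2!j) [0..<n],
                   m_triples = map (\<lambda>j. (RU!j, RV!j, RW!j)) [0..<n],
                   m_open = map (\<lambda>j. ((O1!j - (Us!j - RU!j) mod p) mod p, ((Y j - O2!j) mod p - (Vs!j - RV!j) mod p) mod p)) [0..<n],
                   m_final = A2 \<rparr>,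
        v_output = out \<rparr>)"
proof -
  have h: "(3::nat) - 1 = 2" "((2::nat) = 1) = False" "((1::nat) = 1) = True" by simp_all
  show ?thesis
  unfolding exec_view_def Let_def bDD_def bEE_def
  by (simp only: h if_True if_False add_0_right)
qed



lemma exec_view_eq2:
  "exec_view p \<delta> rnd 2 x1 x2 O1 O2 Us Vs RU RV RW = (let
     n = length x1;
     e1 = epsv \<delta> rnd x1; e2 = epsv \<delta> rnd x2;
     z1 = zscores x1; z2 = zscores x2;
     X = (\<lambda>j. fp_phi p (zt_num rnd x1 ! j)); Y = (\<lambda>j. fp_phi p (zt_num rnd x2 ! j));
     DD = bDD p X O1 Us RU; EE = bEE p Y O2 Vs RV;
     Z1 = (\<lambda>j. (RW!j + RU!j * EE j + RV!j * DD j + DD j * EE j) mod p);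
     Z2 = (\<lambda>j. (((Us!j * Vs!j) mod p - RW!j) mod p + (Us!j - RU!j) mod p * EE j + (Vs!j - RV!j) mod p * DD j) mod p);
     A1 = (\<Sum>j<n. Z1 j) mod p; A2 = (\<Sum>j<n. Z2 j) mod p;
     a = (A1 + A2) mod p;
     cross12 = sum_list (map2 (*) z1 e2);
     cross21 = sum_list (map2 (*) z2 e1);
     out = (fp_phi_inv p (\<delta>^2) a + (cross12 + cross21) - sum_list (map2 (*) e1 e2)) / (real n - 1)
   in \<lparr> v_input = x2,
        v_coins = O2,
        v_msgs = \<lparr> m_eps = e1,
                   m_cross = cross12,
                   m_shares = map (\<lambda>j. O1!j) [0..<n],
                   m_triples = map (\<lambda>j. ((Us!j - RU!j) mod p, (Vs!j - RV!j) mod p, ((Us!j * Vs!j) mod p - RW!j) mod p)) [0..<n],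
                   m_open = map (\<lambda>j. (((X j - O1!j) mod p - RU!j) mod p, (O2!j - RV!j) mod p)) [0..<n],
                   m_final = A1 \<rparr>,
        v_output = out \<rparr>)"
proof -
  have h: "(3::nat) - 2 = 1" "((2::nat) = 1) = False" "((1::nat) = 1) = True" "((2::nat) = 2) = True" by simp_all
  show ?thesis
  unfolding exec_view_def Let_def bDD_def bEE_def
  by (simp only: h if_True if_False add_0_right)
qed



lemma mod_sum_eq': "(\<Sum>i\<in>A. f i mod p) mod p = (\<Sum>i\<in>A. f i) mod (p::int)"
  by (rule mod_sum_eq)

lemma beaver_sum:
  fixes p :: int and X Y :: "nat \<Rightarrow> int"
  shows "((\<Sum>j<n. (RW!j + RU!j * bEE p Y O2 Vs RV j + RV!j * bDD p X O1 Us RU j + bDD p X O1 Us RU j * bEE p Y O2 Vs RV j) mod p) mod p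
        + (\<Sum>j<n. (((Us!j * Vs!j) mod p - RW!j) mod p + (Us!j - RU!j) mod p * bEE p Y O2 Vs RV j + (Vs!j - RV!j) mod p * bDD p X O1 Us RU j) mod p) mod p) mod p
        = (\<Sum>j<n. X j * Y j) mod p"
proof -
  let ?Z1 = "\<lambda>j. (RW!j + RU!j * bEE p Y O2 Vs RV j + RV!j * bDD p X O1 Us RU j + bDD p X O1 Us RU j * bEE p Y O2 Vs RV j) mod p"
  let ?Z2 = "\<lambda>j. (((Us!j * Vs!j) mod p - RW!j) mod p + (Us!j - RU!j) mod p * bEE p Y O2 Vs RV j + (Vs!j - RV!j) mod p * bDD p X O1 Us RU j) mod p"
  have j: "(?Z1 j + ?Z2 j) mod p = (X j * Y j) mod p" for j
    unfolding bDD_def bEE_def by (rule beaver_j)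
  have "((\<Sum>j<n. ?Z1 j) mod p + (\<Sum>j<n. ?Z2 j) mod p) mod p = (\<Sum>j<n. ?Z1 j + ?Z2 j) mod p"
    by (simp only: mod_add_eq sum.distrib)
  also have "\<dots> = (\<Sum>j<n. (?Z1 j + ?Z2 j) mod p) mod p" by (rule mod_sum_eq'[symmetric])
  also have "\<dots> = (\<Sum>j<n. (X j * Y j) mod p) mod p" by (simp only: j)
  also have "\<dots> = (\<Sum>j<n. X j * Y j) mod p" by (rule mod_sum_eq')
  finally show ?thesis .
qed

lemma sum_phi_mod:
  "(\<Sum>j<n. fp_phi p (a j) * fp_phi p (b j)) mod p = (\<Sum>j<n. a j * b j) mod p"
proof -
  have "(\<Sum>j<n. fp_phi p (a j) * fp_phi p (b j)) mod p = (\<Sum>j<n. (fp_phi p (a j) * fp_phi p (b j)) mod p) mod p"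
    by (rule mod_sum_eq'[symmetric])
  also have "\<dots> = (\<Sum>j<n. (a j * b j) mod p) mod p"
    by (simp add: fp_phi_def mod_simps)
  also have "\<dots> = (\<Sum>j<n. a j * b j) mod p" by (rule mod_sum_eq')
  finally show ?thesis .
qed

lemma mod_recover: "0 \<le> b \<Longrightarrow> b < p \<Longrightarrow> ((a + b) mod p - a) mod p = (b::int)"
  by (simp add: mod_simps)

lemma mod_recover': "0 \<le> a \<Longrightarrow> a < p \<Longrightarrow> ((a + b) mod p - b) mod p = (a::int)"
  by (simp add: mod_simps)

lemma ident:
  assumes "length x1 = n" "length x2 = n"
  shows "sum_list (map2 (*) (zscores x1) (zscores x2)) =
    \<delta>^2 * of_int (\<Sum>j<n. zt_num rnd x1 ! j * zt_num rnd x2 ! j)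
    + (sum_list (map2 (*) (zscores x1) (epsv \<delta> rnd x2)) + sum_list (map2 (*) (zscores x2) (epsv \<delta> rnd x1)))
    - sum_list (map2 (*) (epsv \<delta> rnd x1) (epsv \<delta> rnd x2))"
proof -
  have l: "length (zscores x1) = n" "length (zscores x2) = n" "length (epsv \<delta> rnd x1) = n" "length (epsv \<delta> rnd x2) = n"
    using assms by (auto simp: epsv_def)
  show ?thesis
    unfolding sum_list_map2_nth[OF l(1) l(2)] sum_list_map2_nth[OF l(1) l(4)]
      sum_list_map2_nth[OF l(2) l(3)] sum_list_map2_nth[OF l(3) l(4)]
    using l
    by (simp add: epsv_def zt_num_def sum_distrib_left sum.distrib[symmetric] sum_subtractf[symmetric]
       algebra_simps power2_eq_square del: length_zscores)
qed


definition V6 :: "int \<Rightarrow> nat \<Rightarrow> (int list \<times> int list \<times> int list \<times> int list \<times> int list \<times> int list) set" where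
  "V6 p n = VV p n \<times> VV p n \<times> VV p n \<times> VV p n \<times> VV p n \<times> VV p n"

definition V7 :: "int \<Rightarrow> nat \<Rightarrow> (int list \<times> int list \<times> int list \<times> int list \<times> int list \<times> int list \<times> int list) set" where
  "V7 p n = VV p n \<times> V6 p n"

lemma VV_nth: "xs \<in> VV p n \<Longrightarrow> j < n \<Longrightarrow> 0 \<le> xs!j \<and> xs!j < p"
  unfolding VV_def by (auto dest!: nth_mem)

lemma VV_len: "xs \<in> VV p n \<Longrightarrow> length xs = n"
  unfolding VV_def by auto

lemma VV_map: "p > 0 \<Longrightarrow> map (\<lambda>j. f j mod p) [0..<n] \<in> VV p n"
  unfolding VV_def by auto

lemma VV_eq: "xs \<in> VV p n \<Longrightarrow> (\<And>j. j < n \<Longrightarrow> f j mod p = xs!j mod p) \<Longrightarrow> map (\<lambda>j. f j mod p) [0..<n] = xs"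
  by (rule nth_equalityI) (auto simp: VV_len VV_nth)

definition phi1 :: "int \<Rightarrow> nat \<Rightarrow> (nat \<Rightarrow> int) \<Rightarrow> int list \<times> int list \<times> int list \<times> int list \<times> int list \<times> int list \<times> int list
   \<Rightarrow> int list \<times> int list \<times> int list \<times> int list \<times> int list \<times> int list \<times> int list" where
  "phi1 p n Y w = (case w of (O1, O2, Us, Vs, RU, RV, RW) \<Rightarrow>
     (O1, O2, RU, RV, RW, map (\<lambda>j. (O1!j - (Us!j - RU!j) mod p) mod p) [0..<n],
      map (\<lambda>j. ((Y j - O2!j) mod p - (Vs!j - RV!j) mod p) mod p) [0..<n]))"

definition psi1 :: "int \<Rightarrow> nat \<Rightarrow> (nat \<Rightarrow> int) \<Rightarrow> int list \<times> int list \<times> int list \<times> int list \<times> int list \<times> int list \<times> int list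
   \<Rightarrow> int list \<times> int list \<times> int list \<times> int list \<times> int list \<times> int list \<times> int list" where
  "psi1 p n Y w = (case w of (O1, O2, RU, RV, RW, D, E) \<Rightarrow>
     (O1, O2, map (\<lambda>j. (O1!j - D!j + RU!j) mod p) [0..<n],
      map (\<lambda>j. ((Y j - O2!j) mod p - E!j + RV!j) mod p) [0..<n], RU, RV, RW))"

definition phi2 :: "int \<Rightarrow> nat \<Rightarrow> (nat \<Rightarrow> int) \<Rightarrow> int list \<times> int list \<times> int list \<times> int list \<times> int list \<times> int list \<times> int list
   \<Rightarrow> int list \<times> int list \<times> int list \<times> int list \<times> int list \<times> int list \<times> int list" where
  "phi2 p n X w = (case w of (O1, O2, Us, Vs, RU, RV, RW) \<Rightarrow>
     (O2, O1, map (\<lambda>j. (Us!j - RU!j) mod p) [0..<n], map (\<lambda>j. (Vs!j - RV!j) mod p) [0..<n],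
      map (\<lambda>j. ((Us!j * Vs!j) mod p - RW!j) mod p) [0..<n],
      map (\<lambda>j. ((X j - O1!j) mod p - RU!j) mod p) [0..<n],
      map (\<lambda>j. (O2!j - RV!j) mod p) [0..<n]))"

definition psi2 :: "int \<Rightarrow> nat \<Rightarrow> (nat \<Rightarrow> int) \<Rightarrow> int list \<times> int list \<times> int list \<times> int list \<times> int list \<times> int list \<times> int list
   \<Rightarrow> int list \<times> int list \<times> int list \<times> int list \<times> int list \<times> int list \<times> int list" where
  "psi2 p n X w = (case w of (O2, O1, T1, T2, T3, D, E) \<Rightarrow>
     (O1, O2, map (\<lambda>j. (T1!j + (X j - O1!j - D!j) mod p) mod p) [0..<n],
      map (\<lambda>j. (T2!j + (O2!j - E!j) mod p) mod p) [0..<n],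
      map (\<lambda>j. (X j - O1!j - D!j) mod p) [0..<n],
      map (\<lambda>j. (O2!j - E!j) mod p) [0..<n],
      map (\<lambda>j. ((T1!j + (X j - O1!j - D!j) mod p) mod p * ((T2!j + (O2!j - E!j) mod p) mod p) - T3!j) mod p) [0..<n]))"

lemma modc: "[a = b] (mod p) \<Longrightarrow> a mod p = b mod (p::int)"
  by (simp add: cong_def)

lemma nmu: "j < n \<Longrightarrow> map f [0..<n] ! j = f j"
  by simp

lemma VV_eq2: "xs \<in> VV p n \<Longrightarrow> (\<And>j. j < n \<Longrightarrow> [f j = g j] (mod p)) \<Longrightarrow> (\<And>j. j < n \<Longrightarrow> g j = xs!j)
   \<Longrightarrow> map (\<lambda>j. f j mod p) [0..<n] = xs"
  by (rule VV_eq) (auto simp: cong_def)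

lemma bij1:
  assumes "p > 0"
  shows "bij_betw (phi1 p n Y) (V7 p n) (V7 p n)"
proof (rule bij_betw_byWitness[where f'="psi1 p n Y"])
  show "\<forall>a\<in>V7 p n. psi1 p n Y (phi1 p n Y a) = a"
  proof safe
    fix O1 O2 Us Vs RU RV RW assume w: "(O1, O2, Us, Vs, RU, RV, RW) \<in> V7 p n"
    then have m: "O1 \<in> VV p n" "O2 \<in> VV p n" "Us \<in> VV p n" "Vs \<in> VV p n" "RU \<in> VV p n" "RV \<in> VV p n" "RW \<in> VV p n"
      by (auto simp: V7_def V6_def)
    have a: "map (\<lambda>j. (O1!j - map (\<lambda>j. (O1!j - (Us!j - RU!j) mod p) mod p) [0..<n] ! j + RU!j) mod p) [0..<n] = Us"
      by (rule VV_eq2[OF m(3)], simp only: nmu, ((rule cong_add cong_diff cong_mult cong_mod_leftI cong_refl)+)[1], simp add: algebra_simps)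
    have b: "map (\<lambda>j. ((Y j - O2!j) mod p - map (\<lambda>j. ((Y j - O2!j) mod p - (Vs!j - RV!j) mod p) mod p) [0..<n] ! j + RV!j) mod p) [0..<n] = Vs"
      by (rule VV_eq2[OF m(4)], simp only: nmu, ((rule cong_add cong_diff cong_mult cong_mod_leftI cong_refl)+)[1], simp add: algebra_simps)
    show "psi1 p n Y (phi1 p n Y (O1, O2, Us, Vs, RU, RV, RW)) = (O1, O2, Us, Vs, RU, RV, RW)"
      by (simp only: phi1_def psi1_def prod.case a b)
  qed
  show "\<forall>a\<in>V7 p n. phi1 p n Y (psi1 p n Y a) = a"
  proof safe
    fix O1 O2 RU RV RW D E assume w: "(O1, O2, RU, RV, RW, D, E) \<in> V7 p n"
    then have m: "O1 \<in> VV p n" "O2 \<in> VV p n" "RU \<in> VV p n" "RV \<in> VV p n" "RW \<in> VV p n" "D \<in> VV p n" "E \<in> VV p n"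
      by (auto simp: V7_def V6_def)
    have a: "map (\<lambda>j. (O1!j - (map (\<lambda>j. (O1!j - D!j + RU!j) mod p) [0..<n] ! j - RU!j) mod p) mod p) [0..<n] = D"
      by (rule VV_eq2[OF m(6)], simp only: nmu, ((rule cong_add cong_diff cong_mult cong_mod_leftI cong_refl)+)[1], simp add: algebra_simps)
    have b: "map (\<lambda>j. ((Y j - O2!j) mod p - (map (\<lambda>j. ((Y j - O2!j) mod p - E!j + RV!j) mod p) [0..<n] ! j - RV!j) mod p) mod p) [0..<n] = E"
      by (rule VV_eq2[OF m(7)], simp only: nmu, ((rule cong_add cong_diff cong_mult cong_mod_leftI cong_refl)+)[1], simp add: algebra_simps)
    show "phi1 p n Y (psi1 p n Y (O1, O2, RU, RV, RW, D, E)) = (O1, O2, RU, RV, RW, D, E)"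
      by (simp only: phi1_def psi1_def prod.case a b)
  qed
  show "phi1 p n Y ` V7 p n \<subseteq> V7 p n"
    using assms by (auto simp: phi1_def V7_def V6_def VV_map)
  show "psi1 p n Y ` V7 p n \<subseteq> V7 p n"
    using assms by (auto simp: psi1_def V7_def V6_def VV_map)
qed

lemma bij2:
  assumes "p > 0"
  shows "bij_betw (phi2 p n X) (V7 p n) (V7 p n)"
proof (rule bij_betw_byWitness[where f'="psi2 p n X"])
  show "\<forall>a\<in>V7 p n. psi2 p n X (phi2 p n X a) = a"
  proof safe
    fix O1 O2 Us Vs RU RV RW assume w: "(O1, O2, Us, Vs, RU, RV, RW) \<in> V7 p n"
    then have m: "O1 \<in> VV p n" "O2 \<in> VV p n" "Us \<in> VV p n" "Vs \<in> VV p n" "RU \<in> VV p n" "RV \<in> VV p n" "RW \<in> VV p n"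
      by (auto simp: V7_def V6_def)
    let ?T1 = "map (\<lambda>j. (Us!j - RU!j) mod p) [0..<n]"
    let ?T2 = "map (\<lambda>j. (Vs!j - RV!j) mod p) [0..<n]"
    let ?T3 = "map (\<lambda>j. ((Us!j * Vs!j) mod p - RW!j) mod p) [0..<n]"
    let ?D = "map (\<lambda>j. ((X j - O1!j) mod p - RU!j) mod p) [0..<n]"
    let ?E = "map (\<lambda>j. (O2!j - RV!j) mod p) [0..<n]"
    have a: "map (\<lambda>j. (?T1!j + (X j - O1!j - ?D!j) mod p) mod p) [0..<n] = Us"
      by (rule VV_eq2[OF m(3)], simp only: nmu, ((rule cong_add cong_diff cong_mult cong_mod_leftI cong_refl)+)[1], simp add: algebra_simps)
    have b: "map (\<lambda>j. (?T2!j + (O2!j - ?E!j) mod p) mod p) [0..<n] = Vs"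
      by (rule VV_eq2[OF m(4)], simp only: nmu, ((rule cong_add cong_diff cong_mult cong_mod_leftI cong_refl)+)[1], simp add: algebra_simps)
    have c: "map (\<lambda>j. (X j - O1!j - ?D!j) mod p) [0..<n] = RU"
      by (rule VV_eq2[OF m(5)], simp only: nmu, ((rule cong_add cong_diff cong_mult cong_mod_leftI cong_refl)+)[1], simp add: algebra_simps)
    have d: "map (\<lambda>j. (O2!j - ?E!j) mod p) [0..<n] = RV"
      by (rule VV_eq2[OF m(6)], simp only: nmu, ((rule cong_add cong_diff cong_mult cong_mod_leftI cong_refl)+)[1], simp add: algebra_simps)
    have e: "map (\<lambda>j. ((?T1!j + (X j - O1!j - ?D!j) mod p) mod p * ((?T2!j + (O2!j - ?E!j) mod p) mod p) - ?T3!j) mod p) [0..<n] = RW"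
      by (rule VV_eq2[OF m(7)], simp only: nmu, ((rule cong_add cong_diff cong_mult cong_mod_leftI cong_refl)+)[1], simp add: algebra_simps)
    show "psi2 p n X (phi2 p n X (O1, O2, Us, Vs, RU, RV, RW)) = (O1, O2, Us, Vs, RU, RV, RW)"
      by (simp only: phi2_def psi2_def prod.case a b c d e)
  qed
  show "\<forall>a\<in>V7 p n. phi2 p n X (psi2 p n X a) = a"
  proof safe
    fix O2 O1 T1 T2 T3 D E assume w: "(O2, O1, T1, T2, T3, D, E) \<in> V7 p n"
    then have m: "O2 \<in> VV p n" "O1 \<in> VV p n" "T1 \<in> VV p n" "T2 \<in> VV p n" "T3 \<in> VV p n" "D \<in> VV p n" "E \<in> VV p n"
      by (auto simp: V7_def V6_def)
    let ?Us = "map (\<lambda>j. (T1!j + (X j - O1!j - D!j) mod p) mod p) [0..<n]"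
    let ?Vs = "map (\<lambda>j. (T2!j + (O2!j - E!j) mod p) mod p) [0..<n]"
    let ?RU = "map (\<lambda>j. (X j - O1!j - D!j) mod p) [0..<n]"
    let ?RV = "map (\<lambda>j. (O2!j - E!j) mod p) [0..<n]"
    let ?RW = "map (\<lambda>j. ((T1!j + (X j - O1!j - D!j) mod p) mod p * ((T2!j + (O2!j - E!j) mod p) mod p) - T3!j) mod p) [0..<n]"
    have a: "map (\<lambda>j. (?Us!j - ?RU!j) mod p) [0..<n] = T1"
      by (rule VV_eq2[OF m(3)], simp only: nmu, ((rule cong_add cong_diff cong_mult cong_mod_leftI cong_refl)+)[1], simp add: algebra_simps)
    have b: "map (\<lambda>j. (?Vs!j - ?RV!j) mod p) [0..<n] = T2"
      by (rule VV_eq2[OF m(4)], simp only: nmu, ((rule cong_add cong_diff cong_mult cong_mod_leftI cong_refl)+)[1], simp add: algebra_simps)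
    have c: "map (\<lambda>j. ((?Us!j * ?Vs!j) mod p - ?RW!j) mod p) [0..<n] = T3"
      by (rule VV_eq2[OF m(5)], simp only: nmu, ((rule cong_add cong_diff cong_mult cong_mod_leftI cong_refl)+)[1], simp add: algebra_simps)
    have d: "map (\<lambda>j. ((X j - O1!j) mod p - ?RU!j) mod p) [0..<n] = D"
      by (rule VV_eq2[OF m(6)], simp only: nmu, ((rule cong_add cong_diff cong_mult cong_mod_leftI cong_refl)+)[1], simp add: algebra_simps)
    have e: "map (\<lambda>j. (O2!j - ?RV!j) mod p) [0..<n] = E"
      by (rule VV_eq2[OF m(7)], simp only: nmu, ((rule cong_add cong_diff cong_mult cong_mod_leftI cong_refl)+)[1], simp add: algebra_simps)
    show "phi2 p n X (psi2 p n X (O2, O1, T1, T2, T3, D, E)) = (O2, O1, T1, T2, T3, D, E)"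
      by (simp only: phi2_def psi2_def prod.case a b c d e)
  qed
  show "phi2 p n X ` V7 p n \<subseteq> V7 p n"
    using assms by (auto simp: phi2_def V7_def V6_def VV_map)
  show "psi2 p n X ` V7 p n \<subseteq> V7 p n"
    using assms by (auto simp: psi2_def V7_def V6_def VV_map)
qed


definition simA :: "real \<Rightarrow> nat \<Rightarrow> leakage \<Rightarrow> real \<Rightarrow> int" where
  "simA \<delta> n lk r = round (((real n - 1) * r - fst (snd (snd lk)) - snd (snd (snd lk))
      + sum_list (map2 (*) (fst lk) (fst (snd lk)))) / \<delta>^2)"

definition sim_msgs :: "int \<Rightarrow> real \<Rightarrow> (real \<Rightarrow> int) \<Rightarrow> nat \<Rightarrow> real list \<Rightarrow> int list \<Rightarrow> leakage \<Rightarrow> real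
    \<Rightarrow> int list \<Rightarrow> int list \<Rightarrow> int list \<Rightarrow> int list \<Rightarrow> int list \<Rightarrow> int list \<Rightarrow> msgs" where
  "sim_msgs p \<delta> rnd c xc coins lk r G T1 T2 T3 D E = (let
     n = length xc;
     Xc = (\<lambda>j. fp_phi p (zt_num rnd xc ! j));
     DD = (\<lambda>j. if c = 1 then (((Xc j - coins!j) mod p - T1!j) mod p + D!j) mod p
               else (D!j + (G!j - T1!j) mod p) mod p);
     EE = (\<lambda>j. if c = 1 then ((G!j - T2!j) mod p + E!j) mod p
               else (E!j + ((Xc j - coins!j) mod p - T2!j) mod p) mod p);
     Z = (\<lambda>j. if c = 1 then (T3!j + T1!j * EE j + T2!j * DD j + DD j * EE j) mod p
              else (T3!j + T1!j * EE j + T2!j * DD j) mod p);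
     Ac = (\<Sum>j<n. Z j) mod p
   in \<lparr> m_eps = (if c = 1 then fst (snd lk) else fst lk),
        m_cross = (if c = 1 then snd (snd (snd lk)) else fst (snd (snd lk))),
        m_shares = G,
        m_triples = map (\<lambda>j. (T1!j, T2!j, T3!j)) [0..<n],
        m_open = map (\<lambda>j. (D!j, E!j)) [0..<n],
        m_final = (simA \<delta> n lk r mod p - Ac) mod p \<rparr>)"

definition sim :: "int \<Rightarrow> real \<Rightarrow> (real \<Rightarrow> int) \<Rightarrow> simulator" where
  "sim p \<delta> rnd = (\<lambda>c xc coins lk r. map_pmf (\<lambda>(G, T1, T2, T3, D, E). sim_msgs p \<delta> rnd c xc coins lk r G T1 T2 T3 D E)
      (pmf_of_set (V6 p (length xc))))"

definition ideal_fn :: "int \<Rightarrow> real \<Rightarrow> (real \<Rightarrow> int) \<Rightarrow> nat \<Rightarrow> real list \<Rightarrow> real list \<Rightarrow>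
    int list \<times> int list \<times> int list \<times> int list \<times> int list \<times> int list \<times> int list \<Rightarrow> view" where
  "ideal_fn p \<delta> rnd c x1 x2 = (\<lambda>(coins, G, T1, T2, T3, D, E).
     \<lparr> v_input = (if c = 1 then x1 else x2), v_coins = coins,
       v_msgs = sim_msgs p \<delta> rnd c (if c = 1 then x1 else x2) coins (leak \<delta> rnd x1 x2) (pearson x1 x2) G T1 T2 T3 D E,
       v_output = pearson x1 x2 \<rparr>)"

lemma V6_fin: "finite (V6 p n)" by (simp add: V6_def)
lemma V6_ne: "p > 0 \<Longrightarrow> V6 p n \<noteq> {}" by (simp add: V6_def)

lemma ideal_pmf:
  assumes "p > 0" "length (if c = 1 then x1 else x2) = n"
  shows "ideal_view (sim p \<delta> rnd) p \<delta> rnd c x1 x2 = map_pmf (ideal_fn p \<delta> rnd c x1 x2) (pmf_of_set (V7 p n))"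
proof -
  have "ideal_view (sim p \<delta> rnd) p \<delta> rnd c x1 x2 =
     bind_pmf (pmf_of_set (VV p n)) (\<lambda>coins. map_pmf (\<lambda>w. ideal_fn p \<delta> rnd c x1 x2 (coins, w)) (pmf_of_set (V6 p n)))"
    unfolding ideal_view_def Let_def sim_def unif_vec_VV[OF assms(1)] assms(2) map_pmf_comp
    by (intro bind_pmf_cong refl map_pmf_cong) (auto simp: ideal_fn_def)
  also have "\<dots> = map_pmf (ideal_fn p \<delta> rnd c x1 x2) (pmf_of_set (V7 p n))"
    unfolding V7_def using assms(1)
    by (subst bind_pmf_of_set_map) (auto simp: V6_fin V6_ne intro!: map_pmf_cong)
  finally show ?thesis .
qed

lemma real_pmf:
  assumes "p > 0" "length x1 = n"
  shows "real_view p \<delta> rnd c x1 x2 = map_pmf (\<lambda>(O1, O2, Us, Vs, RU, RV, RW). exec_view p \<delta> rnd c x1 x2 O1 O2 Us Vs RU RV RW)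
     (pmf_of_set (V7 p n))"
  unfolding real_view_def Let_def unif_vec_VV[OF assms(1)] assms(2) V7_def V6_def map_pmf_def[symmetric]
  using assms(1)
  by (simp add: bind_pmf_of_set_map)



lemma fin_lemma2: "(T1 mod p + T2 mod p) mod p = s mod p \<Longrightarrow> p > 0 \<Longrightarrow> T2 mod p = (s mod p - T1 mod p) mod (p::int)"
  by (metis mod_recover pos_mod_bound pos_mod_sign)
lemma fin_lemma1: "(T1 mod p + T2 mod p) mod p = s mod p \<Longrightarrow> p > 0 \<Longrightarrow> T1 mod p = (s mod p - T2 mod p) mod (p::int)"
  by (metis mod_recover' pos_mod_bound pos_mod_sign)

lemma nmu': "j \<in> {..<n} \<Longrightarrow> map f [0..<n] ! j = f j"
  by simp

lemma simA_eq:
  assumes l1: "length x1 = n" and l2: "length x2 = n" and n2: "n \<ge> 2" and d: "\<delta> > 0"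
  shows "simA \<delta> n (leak \<delta> rnd x1 x2) (pearson x1 x2) = (\<Sum>j<n. zt_num rnd x1 ! j * zt_num rnd x2 ! j)"
proof -
  define S where "S = (\<Sum>j<n. zt_num rnd x1 ! j * zt_num rnd x2 ! j)"
  have "(real n - 1) * pearson x1 x2 = sum_list (map2 (*) (zscores x1) (zscores x2))"
    using n2 l1 by (simp add: pearson_def)
  also have "\<dots> = \<delta>^2 * of_int S
    + (sum_list (map2 (*) (zscores x1) (epsv \<delta> rnd x2)) + sum_list (map2 (*) (zscores x2) (epsv \<delta> rnd x1)))
    - sum_list (map2 (*) (epsv \<delta> rnd x1) (epsv \<delta> rnd x2))" unfolding S_def by (rule ident[OF l1 l2])
  finally have q: "((real n - 1) * pearson x1 x2 - sum_list (map2 (*) (zscores x1) (epsv \<delta> rnd x2))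
     - sum_list (map2 (*) (zscores x2) (epsv \<delta> rnd x1)) + sum_list (map2 (*) (epsv \<delta> rnd x1) (epsv \<delta> rnd x2))) / \<delta>^2
     = of_int S" using d by (simp add: field_simps)
  show ?thesis
    unfolding simA_def leak_def fst_conv snd_conv q S_def[symmetric] by simp
qed

lemma out_eq:
  assumes l1: "length x1 = n" and l2: "length x2 = n" and n2: "n \<ge> 2"
    and hS: "fp_psi p ((\<Sum>j<n. zt_num rnd x1 ! j * zt_num rnd x2 ! j) mod p) = (\<Sum>j<n. zt_num rnd x1 ! j * zt_num rnd x2 ! j)"
  shows "(fp_phi_inv p (\<delta>^2) ((\<Sum>j<n. zt_num rnd x1 ! j * zt_num rnd x2 ! j) mod p)
     + (sum_list (map2 (*) (zscores x1) (epsv \<delta> rnd x2)) + sum_list (map2 (*) (zscores x2) (epsv \<delta> rnd x1)))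
     - sum_list (map2 (*) (epsv \<delta> rnd x1) (epsv \<delta> rnd x2))) / (real n - 1) = pearson x1 x2"
  unfolding fp_phi_inv_def hS pearson_def ident[OF l1 l2, of \<delta> rnd] l1 by simp

lemma view_eq1:
  fixes p :: int and n :: nat
  assumes p: "p > 0" and w: "(O1, O2, Us, Vs, RU, RV, RW) \<in> V7 p n"
    and l1: "length x1 = n" and l2: "length x2 = n" and n2: "n \<ge> 2" and d: "\<delta> > 0"
    and hS: "fp_psi p ((\<Sum>j<n. zt_num rnd x1 ! j * zt_num rnd x2 ! j) mod p) = (\<Sum>j<n. zt_num rnd x1 ! j * zt_num rnd x2 ! j)"
  shows "exec_view p \<delta> rnd 1 x1 x2 O1 O2 Us Vs RU RV RW =
     ideal_fn p \<delta> rnd 1 x1 x2 (phi1 p n (\<lambda>j. fp_phi p (zt_num rnd x2 ! j)) (O1, O2, Us, Vs, RU, RV, RW))"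
proof -
  have m: "O1 \<in> VV p n" "O2 \<in> VV p n" "Us \<in> VV p n" "Vs \<in> VV p n" "RU \<in> VV p n" "RV \<in> VV p n" "RW \<in> VV p n"
    using w by (auto simp: V7_def V6_def)
  note AB = trans[OF beaver_sum[where X="\<lambda>j. fp_phi p (zt_num rnd x1 ! j)" and Y="\<lambda>j. fp_phi p (zt_num rnd x2 ! j)" and n=n, unfolded bDD_def bEE_def]
     sum_phi_mod[where a="\<lambda>j. zt_num rnd x1 ! j" and b="\<lambda>j. zt_num rnd x2 ! j"]]
  show ?thesis
    unfolding exec_view_eq1 ideal_fn_def phi1_def prod.case sim_msgs_def Let_def l1 bDD_def bEE_def
    apply (simp only: view.ext_inject msgs.ext_inject if_True refl simp_thms nmu' nmu lessThan_iff set_upt atLeastLessThan_iff l1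
       cong: sum.cong map_cong)
    apply (intro conjI)
          apply (simp add: leak_def)
         apply (simp add: leak_def)
        apply (metis VV_len map_nth m(2))
      apply (rule map_cong[OF refl])
      apply (simp only: set_upt atLeastLessThan_iff)
      apply (erule conjE)
      apply (simp only: nmu)
     apply (rule fin_lemma2[OF _ p])
     apply (simp only: nmu' cong: sum.cong)

     apply (simp only: simA_eq[OF l1 l2 n2 d])
     apply (rule AB)
    apply (simp only: AB)
    apply (rule out_eq[OF l1 l2 n2 hS])
    done
qed

lemma view_eq2:
  fixes p :: int and n :: nat
  assumes p: "p > 0" and w: "(O1, O2, Us, Vs, RU, RV, RW) \<in> V7 p n"
    and l1: "length x1 = n" and l2: "length x2 = n" and n2: "n \<ge> 2" and d: "\<delta> > 0"
    and hS: "fp_psi p ((\<Sum>j<n. zt_num rnd x1 ! j * zt_num rnd x2 ! j) mod p) = (\<Sum>j<n. zt_num rnd x1 ! j * zt_num rnd x2 ! j)"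
  shows "exec_view p \<delta> rnd 2 x1 x2 O1 O2 Us Vs RU RV RW =
     ideal_fn p \<delta> rnd 2 x1 x2 (phi2 p n (\<lambda>j. fp_phi p (zt_num rnd x1 ! j)) (O1, O2, Us, Vs, RU, RV, RW))"
proof -
  have m: "O1 \<in> VV p n" "O2 \<in> VV p n" "Us \<in> VV p n" "Vs \<in> VV p n" "RU \<in> VV p n" "RV \<in> VV p n" "RW \<in> VV p n"
    using w by (auto simp: V7_def V6_def)
  note AB = trans[OF beaver_sum[where X="\<lambda>j. fp_phi p (zt_num rnd x1 ! j)" and Y="\<lambda>j. fp_phi p (zt_num rnd x2 ! j)" and n=n, unfolded bDD_def bEE_def]
     sum_phi_mod[where a="\<lambda>j. zt_num rnd x1 ! j" and b="\<lambda>j. zt_num rnd x2 ! j"]]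
  have h: "((2::nat) = 1) = False" by simp
  show ?thesis
    unfolding exec_view_eq2 ideal_fn_def phi2_def prod.case sim_msgs_def Let_def l1 bDD_def bEE_def
    apply (simp only: view.ext_inject msgs.ext_inject if_True if_False h refl simp_thms l2)
    apply (intro conjI)
          apply (simp add: leak_def)
         apply (simp add: leak_def)
        apply (metis VV_len map_nth m(1))
       apply (rule map_cong[OF refl])
       apply (simp only: set_upt atLeastLessThan_iff)
       apply (erule conjE)
       apply (simp only: nmu)
      apply (rule map_cong[OF refl])
      apply (simp only: set_upt atLeastLessThan_iff)
      apply (erule conjE)
      apply (simp only: nmu)
     apply (rule fin_lemma1[OF _ p])
     apply (simp only: nmu' cong: sum.cong)
     apply (simp only: simA_eq[OF l1 l2 n2 d])
     apply (rule AB)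
    apply (simp only: AB)
    apply (rule out_eq[OF l1 l2 n2 hS])
    done
qed


lemma V7_fin: "finite (V7 p n)" by (simp add: V7_def V6_def)
lemma V7_ne: "p > 0 \<Longrightarrow> V7 p n \<noteq> {}" by (simp add: V7_def V6_def)



lemma lin2: "0 < (a::real) \<Longrightarrow> a < 2 * (a + 1/4)" by (simp add: field_simps)

theorem proposition1:
  fixes n :: nat and p :: int and \<delta> R :: real and rnd :: "real \<Rightarrow> int"
  assumes "n \<ge> 2" and "prime p" and "p > 2" and "\<delta> > 0" and "R > 0"
    and "R \<le> real n / \<delta>"
    and "(real n - 1) / \<delta>^2 + real n * (R / \<delta> + 1/4) \<le> of_int (fpM p)"
    and "nearest_rounding p \<delta> rnd"
  shows "\<exists>S :: simulator. \<forall>c\<in>{1, 2}. \<forall>x1 x2.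
           admissible n x1 \<and> admissible n x2 \<and>
           (\<forall>t\<in>set (zt \<delta> rnd x1) \<union> set (zt \<delta> rnd x2). \<bar>t\<bar> \<le> R)
           \<longrightarrow> indisting (real_view p \<delta> rnd c x1 x2) (ideal_view S p \<delta> rnd c x1 x2)"
proof -
  note n2 = assms(1) and d = assms(4) and R0 = assms(5) and hM = assms(7) and nr = assms(8)
  have p0: "p > 0" using assms(3) by simp
  have RM: "R < of_int (fpM p) * \<delta>"
  proof -
    have a: "(real n - 1) / \<delta>^2 \<ge> 0" using n2 by simp
    have "R / \<delta> > 0" using R0 d by simp
    moreover have "real n * (R / \<delta> + 1/4) \<ge> 2 * (R / \<delta> + 1/4)"
      using n2 \<open>R / \<delta> > 0\<close> by (intro mult_right_mono) auto
    moreover have "R / \<delta> < 2 * (R / \<delta> + 1/4)"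
      using \<open>R / \<delta> > 0\<close> by (metis (no_types) lin2)
    ultimately have "real n * (R / \<delta> + 1/4) > R / \<delta>" by (metis order_less_le_trans)
    then have "R / \<delta> < of_int (fpM p)" using a hM by linarith
    then show ?thesis using d by (simp add: divide_less_eq)
  qed
  show ?thesis
  proof (intro exI[of _ "sim p \<delta> rnd"] ballI allI impI)
    fix c x1 x2
    assume c: "c \<in> {1::nat, 2}"
      and H: "admissible n x1 \<and> admissible n x2 \<and> (\<forall>t\<in>set (zt \<delta> rnd x1) \<union> set (zt \<delta> rnd x2). \<bar>t\<bar> \<le> R)"
    have adm1: "admissible n x1" and adm2: "admissible n x2" using H by blast+
    have l1: "length x1 = n" and l2: "length x2 = n" using H by (auto simp: admissible_def)
    have kb1: "\<bar>of_int (zt_num rnd x1 ! j) * \<delta>\<bar> \<le> R" if "j < n" for j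
    proof -
      have HH: "\<forall>t\<in>set (zt \<delta> rnd x1) \<union> set (zt \<delta> rnd x2). \<bar>t\<bar> \<le> R" using H by blast
      have mem: "zt \<delta> rnd x1 ! j \<in> set (zt \<delta> rnd x1)" using that l1 by (intro nth_mem) (simp add: zt_def)
      have val: "zt \<delta> rnd x1 ! j = of_int (zt_num rnd x1 ! j) * \<delta>" using that l1 by (simp add: zt_def zt_num_def)
      show ?thesis using HH mem val by (metis UnI1 UnI2)
    qed
    have kb2: "\<bar>of_int (zt_num rnd x2 ! j) * \<delta>\<bar> \<le> R" if "j < n" for j
    proof -
      have HH: "\<forall>t\<in>set (zt \<delta> rnd x1) \<union> set (zt \<delta> rnd x2). \<bar>t\<bar> \<le> R" using H by blast
      have mem: "zt \<delta> rnd x2 ! j \<in> set (zt \<delta> rnd x2)" using that l2 by (intro nth_mem) (simp add: zt_def)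
      have val: "zt \<delta> rnd x2 ! j = of_int (zt_num rnd x2 ! j) * \<delta>" using that l2 by (simp add: zt_def zt_num_def)
      show ?thesis using HH mem val by (metis UnI1 UnI2)
    qed
    have eb1: "\<bar>zscores x1 ! j - of_int (zt_num rnd x1 ! j) * \<delta>\<bar> \<le> \<delta>/2" if "j < n" for j
    proof -
      have "zt_num rnd x1 ! j = rnd (zscores x1 ! j)" using that l1 by (simp add: zt_num_def)
      then show ?thesis using round_err[OF nr d] kb1[OF that] RM by simp
    qed
    have eb2: "\<bar>zscores x2 ! j - of_int (zt_num rnd x2 ! j) * \<delta>\<bar> \<le> \<delta>/2" if "j < n" for j
    proof -
      have "zt_num rnd x2 ! j = rnd (zscores x2 ! j)" using that l2 by (simp add: zt_num_def)
      then show ?thesis using round_err[OF nr d] kb2[OF that] RM by simp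
    qed
    define S where "S = (\<Sum>j<n. zt_num rnd x1 ! j * zt_num rnd x2 ! j)"
    have "\<bar>of_int S\<bar> \<le> (real n - 1) / \<delta>^2 + real n * (R / \<delta> + 1/4)"
      unfolding S_def
      using main_bound[where ?z1.0="\<lambda>j. zscores x1 ! j" and ?z2.0="\<lambda>j. zscores x2 ! j"
            and ?e1.0="\<lambda>j. zscores x1 ! j - of_int (zt_num rnd x1 ! j) * \<delta>"
            and ?e2.0="\<lambda>j. zscores x2 ! j - of_int (zt_num rnd x2 ! j) * \<delta>"
            and ?k1.0="\<lambda>j. zt_num rnd x1 ! j" and ?k2.0="\<lambda>j. zt_num rnd x2 ! j" and n=n and R=R,
            OF d zscores_sq[OF adm1 n2] zscores_sq[OF adm2 n2] eb1 eb2 kb1 kb2]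
      by simp
    then have "\<bar>of_int S\<bar> \<le> (of_int (fpM p) :: real)" using hM by linarith
    then have "- fpM p \<le> S" "S \<le> fpM p" by linarith+
    then have hS: "fp_psi p (S mod p) = S" by (rule psi_mod[OF p0])
    have eq: "real_view p \<delta> rnd c x1 x2 = ideal_view (sim p \<delta> rnd) p \<delta> rnd c x1 x2"
    proof (cases "c = 1")
      case True
      have "real_view p \<delta> rnd c x1 x2 = map_pmf (\<lambda>(O1, O2, Us, Vs, RU, RV, RW). exec_view p \<delta> rnd 1 x1 x2 O1 O2 Us Vs RU RV RW)
         (pmf_of_set (V7 p n))" unfolding True by (rule real_pmf[OF p0 l1])
      also have "\<dots> = map_pmf (ideal_fn p \<delta> rnd 1 x1 x2 \<circ> phi1 p n (\<lambda>j. fp_phi p (zt_num rnd x2 ! j))) (pmf_of_set (V7 p n))"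
      proof (rule map_pmf_cong[OF refl])
        fix w assume "w \<in> set_pmf (pmf_of_set (V7 p n))"
        then have w: "w \<in> V7 p n" using V7_fin V7_ne[OF p0] by simp
        obtain O1 O2 Us Vs RU RV RW where ww: "w = (O1, O2, Us, Vs, RU, RV, RW)" by (cases w) blast
        show "(\<lambda>(O1, O2, Us, Vs, RU, RV, RW). exec_view p \<delta> rnd 1 x1 x2 O1 O2 Us Vs RU RV RW) w =
          (ideal_fn p \<delta> rnd 1 x1 x2 \<circ> phi1 p n (\<lambda>j. fp_phi p (zt_num rnd x2 ! j))) w"
          unfolding ww prod.case comp_def
          by (rule view_eq1[OF p0 w[unfolded ww] l1 l2 n2 d hS[unfolded S_def]])
      qed
      also have "\<dots> = map_pmf (ideal_fn p \<delta> rnd 1 x1 x2) (map_pmf (phi1 p n (\<lambda>j. fp_phi p (zt_num rnd x2 ! j))) (pmf_of_set (V7 p n)))"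
        by (simp only: map_pmf_comp comp_def)
      also have "\<dots> = map_pmf (ideal_fn p \<delta> rnd 1 x1 x2) (pmf_of_set (V7 p n))"
        by (simp only: map_pmf_of_set_bij_betw[OF bij1[OF p0] V7_ne[OF p0] V7_fin])
      also have "\<dots> = ideal_view (sim p \<delta> rnd) p \<delta> rnd c x1 x2"
        unfolding True by (rule ideal_pmf[OF p0, symmetric]) (simp add: l1)
      finally show ?thesis .
    next
      case False
      then have c2: "c = 2" using c by auto
      have "real_view p \<delta> rnd c x1 x2 = map_pmf (\<lambda>(O1, O2, Us, Vs, RU, RV, RW). exec_view p \<delta> rnd 2 x1 x2 O1 O2 Us Vs RU RV RW)
         (pmf_of_set (V7 p n))" unfolding c2 by (rule real_pmf[OF p0 l1])
      also have "\<dots> = map_pmf (ideal_fn p \<delta> rnd 2 x1 x2 \<circ> phi2 p n (\<lambda>j. fp_phi p (zt_num rnd x1 ! j))) (pmf_of_set (V7 p n))"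
      proof (rule map_pmf_cong[OF refl])
        fix w assume "w \<in> set_pmf (pmf_of_set (V7 p n))"
        then have w: "w \<in> V7 p n" using V7_fin V7_ne[OF p0] by simp
        obtain O1 O2 Us Vs RU RV RW where ww: "w = (O1, O2, Us, Vs, RU, RV, RW)" by (cases w) blast
        show "(\<lambda>(O1, O2, Us, Vs, RU, RV, RW). exec_view p \<delta> rnd 2 x1 x2 O1 O2 Us Vs RU RV RW) w =
          (ideal_fn p \<delta> rnd 2 x1 x2 \<circ> phi2 p n (\<lambda>j. fp_phi p (zt_num rnd x1 ! j))) w"
          unfolding ww prod.case comp_def
          by (rule view_eq2[OF p0 w[unfolded ww] l1 l2 n2 d hS[unfolded S_def]])
      qed
      also have "\<dots> = map_pmf (ideal_fn p \<delta> rnd 2 x1 x2) (map_pmf (phi2 p n (\<lambda>j. fp_phi p (zt_num rnd x1 ! j))) (pmf_of_set (V7 p n)))"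
        by (simp only: map_pmf_comp comp_def)
      also have "\<dots> = map_pmf (ideal_fn p \<delta> rnd 2 x1 x2) (pmf_of_set (V7 p n))"
        by (simp only: map_pmf_of_set_bij_betw[OF bij2[OF p0] V7_ne[OF p0] V7_fin])
      also have "\<dots> = ideal_view (sim p \<delta> rnd) p \<delta> rnd c x1 x2"
        unfolding c2 by (rule ideal_pmf[OF p0, symmetric]) (simp add: l2)
      finally show ?thesis .
    qed
    show "indisting (real_view p \<delta> rnd c x1 x2) (ideal_view (sim p \<delta> rnd) p \<delta> rnd c x1 x2)"
      unfolding indisting_def eq by simp
  qed
qed


end
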